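(* Let $\mathcal{I}$ be a hereditary weak P-ideal and $\mathcal{J}$ any ideal. Then $\mathcal{J}\preceq\mathcal{I}$ if and only if $\mathcal{J}\leq_K\mathcal{I}$.
   Context: An ideal on an infinite countable set $X$ is a family $\mathcal{I}\subseteq\mathcal{P}(X)$ closed under subsets and finite unions, containing all finite subsets, with $X\notin\mathcal{I}$. $\mathcal{I}|A=\{B\cap A:B\in\mathcal{I}\}$. $\mathcal{J}\leq_K\mathcal{I}$: there is a function $f:\bigcup\mathcal{I}\to\bigcup\mathcal{J}$ with $f^{-1}[B]\in\mathcal{I}$ for all $B\in\mathcal{J}$. $\mathrm{Fin}^2$: ideal on $\omega^2$ of all $A$ with only finitely many $n$ such that $\{m:(n,m)\in A\}$ is infinite. $\mathcal{I}\sqsubseteq\mathcal{J}$: there is a bijection $f:\bigcup\mathcal{J}\to\bigcup\mathcal{I}$ with $f^{-1}[A]\in\mathcal{J}$ for all $A\in\mathcal{I}$. $\mathcal{I}$ is a hereditary weak P-ideal if $\mathrm{Fin}^2\not\sqsubseteq\mathcal{I}|A$ for every $A\notin\mathcal{I}$. $\mathrm{Fin}\otimes\emptyset$: the family of $A\subseteq\omega^2$ with $A\subseteq F\times\omega$ for some finite $F$. If $(G_{i,j})_{(i,j)\in\omega^2}$ is a partition of $\bigcup\mathcal{I}$ (pieces may be empty) into sets from $\mathcal{I}$, then $\hat{\mathcal{I}}(G_{i,j})$ is the ideal on $\omega^2$ of all $A\subseteq\omega^2$ such that every $X\subseteq\bigcup_{(i,j)\in A}G_{i,j}$ with $X\cap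 G_{i,j}$ finite for all $(i,j)\in A$ belongs to $\mathcal{I}$. $\mathcal{J}\preceq\mathcal{I}$ means: for every partition $(H_{i,j})\subseteq\mathcal{J}$ of $\bigcup\mathcal{J}$ with $\mathrm{Fin}\otimes\emptyset\subseteq\hat{\mathcal{J}}(H_{i,j})$ there is a partition $(G_{i,j})\subseteq\mathcal{I}$ of $\bigcup\mathcal{I}$ with $\hat{\mathcal{J}}(H_{i,j})\cap\mathrm{Fin}^2\subseteq\hat{\mathcal{I}}(G_{i,j})$. *)

theory Defs
  imports Main "HOL-Library.Countable_Set"
begin

text \<open>An ideal on the (infinite, countable) set X = \<Union>I.\<close>
definition is_ideal :: "'a set set \<Rightarrow> bool" where
  "is_ideal I \<longleftrightarrow>
     infinite (\<Union>I) \<and> countable (\<Union>I) \<and>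
     (\<forall>A\<in>I. \<forall>B. B \<subseteq> A \<longrightarrow> B \<in> I) \<and>
     (\<forall>A\<in>I. \<forall>B\<in>I. A \<union> B \<in> I) \<and>
     (\<forall>F. F \<subseteq> \<Union>I \<and> finite F \<longrightarrow> F \<in> I) \<and>
     \<Union>I \<notin> I"

definition restr_ideal :: "'a set set \<Rightarrow> 'a set \<Rightarrow> 'a set set" where
  "restr_ideal I A = {B \<inter> A | B. B \<in> I}"

definition katetov_le :: "'b set set \<Rightarrow> 'a set set \<Rightarrow> bool" where
  "katetov_le J I \<longleftrightarrow>
     (\<exists>f. (\<forall>x\<in>\<Union>I. f x \<in> \<Union>J) \<and> (\<forall>B\<in>J. {x\<in>\<Union>I. f x \<in> B} \<in> I))"

definition Fin2 :: "(nat \<times> nat) set set" where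
  "Fin2 = {A. finite {n. infinite {m. (n, m) \<in> A}}}"

definition Fin_times_empty :: "(nat \<times> nat) set set" where
  "Fin_times_empty = {A. \<exists>F. finite F \<and> A \<subseteq> F \<times> UNIV}"

definition sq_le :: "'a set set \<Rightarrow> 'b set set \<Rightarrow> bool" where
  "sq_le I J \<longleftrightarrow>
     (\<exists>f. bij_betw f (\<Union>J) (\<Union>I) \<and> (\<forall>A\<in>I. {x\<in>\<Union>J. f x \<in> A} \<in> J))"

definition hereditary_weak_P :: "'a set set \<Rightarrow> bool" where
  "hereditary_weak_P I \<longleftrightarrow>
     (\<forall>A. A \<subseteq> \<Union>I \<and> A \<notin> I \<longrightarrow> \<not> sq_le Fin2 (restr_ideal I A))"

text \<open>(G i j) is a partition of \<Union>I into sets from I (pieces may be empty).\<close>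
definition ideal_partition :: "'a set set \<Rightarrow> (nat \<times> nat \<Rightarrow> 'a set) \<Rightarrow> bool" where
  "ideal_partition I G \<longleftrightarrow>
     (\<forall>p. G p \<in> I) \<and> (\<forall>p q. p \<noteq> q \<longrightarrow> G p \<inter> G q = {}) \<and> (\<Union>p. G p) = \<Union>I"

definition hat_ideal :: "'a set set \<Rightarrow> (nat \<times> nat \<Rightarrow> 'a set) \<Rightarrow> (nat \<times> nat) set set" where
  "hat_ideal I G = {A. \<forall>X. X \<subseteq> (\<Union>p\<in>A. G p) \<and> (\<forall>p\<in>A. finite (X \<inter> G p)) \<longrightarrow> X \<in> I}"

definition prec_le :: "'b set set \<Rightarrow> 'a set set \<Rightarrow> bool" where
  "prec_le J I \<longleftrightarrow>
     (\<forall>H. ideal_partition J H \<and> Fin_times_empty \<subseteq> hat_ideal J H \<longrightarrow>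
        (\<exists>G. ideal_partition I G \<and> hat_ideal J H \<inter> Fin2 \<subseteq> hat_ideal I G))"

end

theory Submission
  imports Defs
begin

lemma ideal_sub: "is_ideal I \<Longrightarrow> A \<in> I \<Longrightarrow> B \<subseteq> A \<Longrightarrow> B \<in> I"
  unfolding is_ideal_def by blast
lemma ideal_Un: "is_ideal I \<Longrightarrow> A \<in> I \<Longrightarrow> B \<in> I \<Longrightarrow> A \<union> B \<in> I"
  unfolding is_ideal_def by blast
lemma ideal_fin: "is_ideal I \<Longrightarrow> F \<subseteq> \<Union>I \<Longrightarrow> finite F \<Longrightarrow> F \<in> I"
  unfolding is_ideal_def by blast
lemma ideal_empty: "is_ideal I \<Longrightarrow> {} \<in> I"
  using ideal_fin by blast
lemma ideal_top: "is_ideal I \<Longrightarrow> \<Union>I \<notin> I"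
  unfolding is_ideal_def by blast
lemma ideal_cnt: "is_ideal I \<Longrightarrow> countable (\<Union>I)"
  unfolding is_ideal_def by blast
lemma ideal_inf: "is_ideal I \<Longrightarrow> infinite (\<Union>I)"
  unfolding is_ideal_def by blast
lemma ideal_UN_finite:
  assumes "is_ideal I" "finite F" "\<forall>j\<in>F. S j \<in> I"
  shows "(\<Union>j\<in>F. S j) \<in> I"
  using assms(2,3)
proof (induction F rule: finite_induct)
  case empty then show ?case using ideal_empty[OF assms(1)] by simp
next
  case (insert x F) then show ?case using ideal_Un[OF assms(1)] by simp
qed

lemma Union_Fin2: "\<Union>Fin2 = UNIV"
proof -
  have "{p} \<in> Fin2" for p
  proof -
    have "{n. infinite {m. (n, m) \<in> {p}}} = {}"
    proof -
      have "finite {m. (n, m) \<in> {p}}" for n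
        by (rule finite_subset[of _ "{snd p}"]) auto
      then show ?thesis by auto
    qed
    then show ?thesis unfolding Fin2_def by simp
  qed
  then show ?thesis by blast
qed

lemma Union_restr: "is_ideal I \<Longrightarrow> Y \<subseteq> \<Union>I \<Longrightarrow> \<Union>(restr_ideal I Y) = Y"
proof -
  assume I: "is_ideal I" and Y: "Y \<subseteq> \<Union>I"
  have "y \<in> \<Union>(restr_ideal I Y)" if "y \<in> Y" for y
  proof -
    have "{y} \<in> I" using ideal_fin[OF I, of "{y}"] that Y by auto
    then have "{y} \<inter> Y \<in> restr_ideal I Y" unfolding restr_ideal_def by blast
    then show ?thesis using that by blast
  qed
  moreover have "\<Union>(restr_ideal I Y) \<subseteq> Y" unfolding restr_ideal_def by blast
  ultimately show ?thesis by blast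
qed

lemma selector_lemma:
  fixes P :: "'c::countable \<Rightarrow> 'a set"
  assumes I: "is_ideal I" and hw: "hereditary_weak_P I"
    and PI: "\<And>k. P k \<in> I"
    and disj: "\<And>k l. k \<noteq> l \<Longrightarrow> P k \<inter> P l = {}"
    and sel: "\<And>X. X \<subseteq> (\<Union>k. P k) \<Longrightarrow> (\<And>k. finite (X \<inter> P k)) \<Longrightarrow> X \<in> I"
  shows "(\<Union>k. P k) \<in> I"
proof (rule ccontr)
  assume notin: "(\<Union>k. P k) \<notin> I"
  define Kinf where "Kinf = {k. infinite (P k)}"
  define Yfin where "Yfin = (\<Union>k\<in>-Kinf. P k)"
  define Y' where "Y' = (\<Union>k\<in>Kinf. P k)"
  have split: "(\<Union>k. P k) = Yfin \<union> Y'" unfolding Yfin_def Y'_def by blast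
  have PU: "P k \<subseteq> \<Union>I" for k using PI by blast
  have Yfin: "Yfin \<in> I"
  proof (rule sel)
    show "Yfin \<subseteq> (\<Union>k. P k)" unfolding Yfin_def by blast
    fix k show "finite (Yfin \<inter> P k)"
    proof (cases "k \<in> Kinf")
      case True
      have "\<And>l. l \<notin> Kinf \<Longrightarrow> P l \<inter> P k = {}" using True disj by metis
      then have "Yfin \<inter> P k = {}" unfolding Yfin_def by blast
      then show ?thesis by simp
    next
      case False then show ?thesis unfolding Kinf_def by simp
    qed
  qed
  have Y'notin: "Y' \<notin> I" using notin split Yfin ideal_Un[OF I] by metis
  have Kinf_inf: "infinite Kinf"
  proof
    assume "finite Kinf"
    then have "Y' \<in> I" unfolding Y'_def using ideal_UN_finite[OF I] PI by blast
    then show False using Y'notin by simp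
  qed
  define e where "e = from_nat_into Kinf"
  have ebij: "bij_betw e UNIV Kinf" unfolding e_def
    by (rule bij_betw_from_nat_into[OF countableI_type Kinf_inf])
  have einj: "e i = e j \<longleftrightarrow> i = j" for i j using ebij unfolding bij_betw_def inj_on_def by blast
  have eK: "e j \<in> Kinf" for j using ebij unfolding bij_betw_def by blast
  have Pe_cnt: "countable (P (e j))" for j using PU countable_subset ideal_cnt[OF I] by blast
  have Pe_inf: "infinite (P (e j))" for j using eK unfolding Kinf_def by blast
  define \<gamma> where "\<gamma> = (\<lambda>(j::nat, m::nat). from_nat_into (P (e j)) m)"
  have \<gamma>in: "\<gamma> (j, m) \<in> P (e j)" for j m
    unfolding \<gamma>_def using bij_betw_from_nat_into[OF Pe_cnt Pe_inf] unfolding bij_betw_def by auto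
  have \<gamma>j: "\<gamma> (j', m) \<in> P (e j) \<Longrightarrow> j' = j" for j j' m
    using \<gamma>in[of j' m] disj einj by blast
  have \<gamma>bij: "bij_betw \<gamma> UNIV Y'"
  proof -
    have "inj \<gamma>"
    proof (rule injI)
      fix p q assume eq: "\<gamma> p = \<gamma> q"
      obtain j m where p: "p = (j, m)" by fastforce
      obtain j' m' where q: "q = (j', m')" by fastforce
      have "j' = j" using \<gamma>j[of j' m' j] eq \<gamma>in[of j m] p q by simp
      then show "p = q" using eq p q unfolding \<gamma>_def
        using from_nat_into_inj_infinite[OF Pe_cnt Pe_inf] by simp
    qed
    moreover have "range \<gamma> = Y'"
    proof
      show "range \<gamma> \<subseteq> Y'"
      proof
        fix y assume "y \<in> range \<gamma>"
        then obtain j m where "y = \<gamma> (j, m)" by auto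
        then show "y \<in> Y'" unfolding Y'_def using \<gamma>in[of j m] eK[of j] by blast
      qed
      show "Y' \<subseteq> range \<gamma>"
      proof
        fix y assume "y \<in> Y'"
        then obtain k where k: "k \<in> Kinf" "y \<in> P k" unfolding Y'_def by blast
        then obtain j where j: "k = e j" using ebij unfolding bij_betw_def by blast
        have "y \<in> range (from_nat_into (P (e j)))"
          using bij_betw_from_nat_into[OF Pe_cnt Pe_inf] k j unfolding bij_betw_def by auto
        then obtain m where "y = from_nat_into (P (e j)) m" by blast
        then have "y = \<gamma> (j, m)" unfolding \<gamma>_def by simp
        then show "y \<in> range \<gamma>" by blast
      qed
    qed
    ultimately show ?thesis unfolding bij_betw_def by blast
  qed
  define \<beta> where "\<beta> = inv_into UNIV \<gamma>"
  have \<beta>bij: "bij_betw \<beta> Y' UNIV" unfolding \<beta>_def by (rule bij_betw_inv_into[OF \<gamma>bij])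
  have pre: "{x \<in> Y'. \<beta> x \<in> A} = \<gamma> ` A" for A
  proof
    show "{x \<in> Y'. \<beta> x \<in> A} \<subseteq> \<gamma> ` A"
    proof
      fix x assume x: "x \<in> {x \<in> Y'. \<beta> x \<in> A}"
      have "\<gamma> (\<beta> x) = x" unfolding \<beta>_def using x \<gamma>bij
        by (simp add: bij_betw_inv_into_right)
      then show "x \<in> \<gamma> ` A" using x by (metis (mono_tags, lifting) image_eqI mem_Collect_eq)
    qed
    show "\<gamma> ` A \<subseteq> {x \<in> Y'. \<beta> x \<in> A}"
    proof
      fix x assume "x \<in> \<gamma> ` A"
      then obtain p where p: "p \<in> A" "x = \<gamma> p" by blast
      have "\<beta> x = p" unfolding \<beta>_def p(2) using \<gamma>bij unfolding bij_betw_def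
        by (simp add: inv_into_f_f)
      moreover have "x \<in> Y'" using p \<gamma>bij unfolding bij_betw_def by blast
      ultimately show "x \<in> {x \<in> Y'. \<beta> x \<in> A}" using p by simp
    qed
  qed
  have imgI: "\<gamma> ` A \<in> I" if A: "A \<in> Fin2" for A
  proof -
    define F where "F = {n. infinite {m. (n, m) \<in> A}}"
    have Ffin: "finite F" using A unfolding Fin2_def F_def by simp
    have sub: "\<gamma> ` A \<subseteq> (\<Union>j\<in>F. P (e j)) \<union> \<gamma> ` (A \<inter> {p. fst p \<notin> F})"
    proof
      fix x assume "x \<in> \<gamma> ` A"
      then obtain j m where jm: "(j, m) \<in> A" "x = \<gamma> (j, m)" by auto
      show "x \<in> (\<Union>j\<in>F. P (e j)) \<union> \<gamma> ` (A \<inter> {p. fst p \<notin> F})"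
      proof (cases "j \<in> F")
        case True then show ?thesis using jm \<gamma>in by blast
      next
        case False then show ?thesis using jm by force
      qed
    qed
    have s1: "(\<Union>j\<in>F. P (e j)) \<in> I" by (rule ideal_UN_finite[OF I Ffin]) (simp add: PI)
    have s2: "\<gamma> ` (A \<inter> {p. fst p \<notin> F}) \<in> I"
    proof (rule sel)
      show "\<gamma> ` (A \<inter> {p. fst p \<notin> F}) \<subseteq> (\<Union>k. P k)"
      proof
        fix x assume "x \<in> \<gamma> ` (A \<inter> {p. fst p \<notin> F})"
        then obtain j m where "x = \<gamma> (j, m)" by auto
        then show "x \<in> (\<Union>k. P k)" using \<gamma>in[of j m] by blast
      qed
      fix k show "finite (\<gamma> ` (A \<inter> {p. fst p \<notin> F}) \<inter> P k)"
      proof (cases "k \<in> Kinf")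
        case False then show ?thesis unfolding Kinf_def by simp
      next
        case True
        then obtain j where j: "k = e j" using ebij unfolding bij_betw_def by blast
        have "\<gamma> ` (A \<inter> {p. fst p \<notin> F}) \<inter> P k \<subseteq> \<gamma> ` ({j} \<times> {m. (j, m) \<in> A \<and> j \<notin> F})"
        proof
          fix x assume x: "x \<in> \<gamma> ` (A \<inter> {p. fst p \<notin> F}) \<inter> P k"
          then obtain j' m where jm: "(j', m) \<in> A" "j' \<notin> F" "x = \<gamma> (j', m)" by auto
          have "j' = j" using \<gamma>j[of j' m j] x jm j by simp
          then show "x \<in> \<gamma> ` ({j} \<times> {m. (j, m) \<in> A \<and> j \<notin> F})" using jm by blast
        qed
        moreover have "finite ({j} \<times> {m. (j, m) \<in> A \<and> j \<notin> F})"
        proof (cases "j \<in> F")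
          case True then show ?thesis by simp
        next
          case False
          then have "finite {m. (j, m) \<in> A}" unfolding F_def by simp
          then show ?thesis by simp
        qed
        ultimately show ?thesis using finite_subset by blast
      qed
    qed
    show ?thesis using ideal_sub[OF I ideal_Un[OF I s1 s2] sub] .
  qed
  have Y'sub: "Y' \<subseteq> \<Union>I" unfolding Y'_def using PU by blast
  have "sq_le Fin2 (restr_ideal I Y')"
    unfolding sq_le_def
  proof (intro exI conjI ballI)
    show "bij_betw \<beta> (\<Union>(restr_ideal I Y')) (\<Union>Fin2)"
      using \<beta>bij Union_Fin2 Union_restr[OF I Y'sub] by simp
    fix A assume A: "A \<in> Fin2"
    have "\<gamma> ` A \<inter> Y' \<in> restr_ideal I Y'" unfolding restr_ideal_def using imgI[OF A] by blast
    moreover have "\<gamma> ` A \<inter> Y' = \<gamma> ` A" using \<gamma>bij unfolding bij_betw_def by blast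
    ultimately show "{x \<in> \<Union>(restr_ideal I Y'). \<beta> x \<in> A} \<in> restr_ideal I Y'"
      using pre Union_restr[OF I Y'sub] by simp
  qed
  then show False using hw Y'sub Y'notin unfolding hereditary_weak_P_def by blast
qed


lemma hat_union_in:
  assumes I: "is_ideal I" and hw: "hereditary_weak_P I"
    and G: "ideal_partition I G" and A: "A \<in> hat_ideal I G"
  shows "(\<Union>p\<in>A. G p) \<in> I"
proof -
  have Gp: "\<And>p. G p \<in> I" and Gd: "\<And>p q. p \<noteq> q \<Longrightarrow> G p \<inter> G q = {}"
    using G unfolding ideal_partition_def by blast+
  define P where "P = (\<lambda>p. if p \<in> A then G p else {})"
  have eq: "(\<Union>k. P k) = (\<Union>p\<in>A. G p)" unfolding P_def by auto
  have "(\<Union>k. P k) \<in> I"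
  proof (rule selector_lemma[OF I hw])
    fix k show "P k \<in> I" unfolding P_def using Gp ideal_empty[OF I] by simp
  next
    fix k l :: "nat \<times> nat" assume "k \<noteq> l"
    then show "P k \<inter> P l = {}" unfolding P_def using Gd by simp
  next
    fix X assume X: "X \<subseteq> (\<Union>k. P k)" and fin: "\<And>k. finite (X \<inter> P k)"
    have "X \<subseteq> (\<Union>p\<in>A. G p)" using X eq by simp
    moreover have "\<forall>p\<in>A. finite (X \<inter> G p)" using fin unfolding P_def by (metis (full_types))
    ultimately show "X \<in> I" using A unfolding hat_ideal_def by blast
  qed
  then show ?thesis using eq by simp
qed

lemma katetov_imp_prec:
  assumes I: "is_ideal I" and J: "is_ideal J" and K: "katetov_le J I"
  shows "prec_le J I"
  unfolding prec_le_def
proof (intro allI impI)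
  fix H assume "ideal_partition J H \<and> Fin_times_empty \<subseteq> hat_ideal J H"
  then have H: "ideal_partition J H" by blast
  obtain f where f1: "\<forall>x\<in>\<Union>I. f x \<in> \<Union>J" and f2: "\<forall>B\<in>J. {x\<in>\<Union>I. f x \<in> B} \<in> I"
    using K unfolding katetov_le_def by blast
  define G where "G = (\<lambda>p. {x\<in>\<Union>I. f x \<in> H p})"
  have Hp: "\<forall>p. H p \<in> J" and Hd: "\<forall>p q. p \<noteq> q \<longrightarrow> H p \<inter> H q = {}" and HU: "(\<Union>p. H p) = \<Union>J"
    using H unfolding ideal_partition_def by blast+
  have "ideal_partition I G"
    unfolding ideal_partition_def
  proof (intro conjI allI impI)
    fix p show "G p \<in> I" unfolding G_def using f2 Hp by blast
  next
    fix p q :: "nat \<times> nat" assume "p \<noteq> q" then show "G p \<inter> G q = {}"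
      unfolding G_def using Hd by blast
  next
    show "(\<Union>p. G p) = \<Union>I"
    proof
      show "(\<Union>p. G p) \<subseteq> \<Union>I" unfolding G_def by blast
      show "\<Union>I \<subseteq> (\<Union>p. G p)"
      proof
        fix x assume x: "x \<in> \<Union>I"
        then have "f x \<in> (\<Union>p. H p)" using f1 HU by blast
        then obtain p where "f x \<in> H p" by blast
        then show "x \<in> (\<Union>p. G p)" unfolding G_def using x by blast
      qed
    qed
  qed
  moreover have "hat_ideal J H \<inter> Fin2 \<subseteq> hat_ideal I G"
  proof
    fix A assume "A \<in> hat_ideal J H \<inter> Fin2"
    then have A: "A \<in> hat_ideal J H" by blast
    show "A \<in> hat_ideal I G"
      unfolding hat_ideal_def
    proof (intro CollectI allI impI)
      fix X assume X: "X \<subseteq> (\<Union>p\<in>A. G p) \<and> (\<forall>p\<in>A. finite (X \<inter> G p))"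
      define Y where "Y = f ` X"
      have Ysub: "Y \<subseteq> (\<Union>p\<in>A. H p)" unfolding Y_def using X unfolding G_def by blast
      have Yfin: "\<forall>p\<in>A. finite (Y \<inter> H p)"
      proof
        fix p assume p: "p \<in> A"
        have "Y \<inter> H p \<subseteq> f ` (X \<inter> G p)"
        proof
          fix y assume y: "y \<in> Y \<inter> H p"
          then obtain x where x: "x \<in> X" "y = f x" unfolding Y_def by blast
          then obtain q where q: "q \<in> A" "x \<in> G q" using X by blast
          then have "f x \<in> H q" "x \<in> \<Union>I" unfolding G_def by auto
          then have "q = p" using Hd y x by blast
          then show "y \<in> f ` (X \<inter> G p)" using x q by blast
        qed
        then show "finite (Y \<inter> H p)" using X p finite_subset by blast
      qed
      have "Y \<in> J" using A Ysub Yfin unfolding hat_ideal_def by blast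
      then have "{x\<in>\<Union>I. f x \<in> Y} \<in> I" using f2 by blast
      moreover have "X \<subseteq> {x\<in>\<Union>I. f x \<in> Y}" using X unfolding Y_def G_def by blast
      ultimately show "X \<in> I" using ideal_sub[OF I] by blast
    qed
  qed
  ultimately show "\<exists>G. ideal_partition I G \<and> hat_ideal J H \<inter> Fin2 \<subseteq> hat_ideal I G" by blast
qed


lemma hat_of_union: "is_ideal J \<Longrightarrow> (\<Union>p\<in>A. H p) \<in> J \<Longrightarrow> A \<in> hat_ideal J H"
  unfolding hat_ideal_def using ideal_sub by blast

lemma prec_imp_katetov:
  assumes I: "is_ideal I" and hw: "hereditary_weak_P I" and J: "is_ideal J"
    and P: "prec_le J I"
  shows "katetov_le J I"
proof -
  define b where "b = from_nat_into (\<Union>J)"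
  have bbij: "bij_betw b UNIV (\<Union>J)" unfolding b_def
    by (rule bij_betw_from_nat_into[OF ideal_cnt[OF J] ideal_inf[OF J]])
  have binj: "b i = b j \<longleftrightarrow> i = j" for i j using bbij unfolding bij_betw_def inj_on_def by blast
  have brange: "range b = \<Union>J" using bbij unfolding bij_betw_def by blast
  define H :: "nat \<times> nat \<Rightarrow> 'b set" where "H = (\<lambda>p. if snd p = 0 then {b (fst p)} else {})"
  have HJ: "ideal_partition J H" unfolding ideal_partition_def
  proof (intro conjI allI impI)
    fix p :: "nat \<times> nat"
    have "b (fst p) \<in> \<Union>J" using brange by blast
    then have "{b (fst p)} \<in> J" using ideal_fin[OF J, of "{b (fst p)}"] by blast
    then show "H p \<in> J" unfolding H_def using ideal_empty[OF J] by auto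
  next
    fix p q :: "nat \<times> nat" assume "p \<noteq> q" then show "H p \<inter> H q = {}"
      unfolding H_def using binj by (cases p, cases q) auto
  next
    show "(\<Union>p. H p) = \<Union>J"
    proof
      show "(\<Union>p. H p) \<subseteq> \<Union>J" unfolding H_def using brange by auto
      show "\<Union>J \<subseteq> (\<Union>p. H p)"
      proof
        fix y assume "y \<in> \<Union>J"
        then obtain n where "y = b n" using brange by blast
        then have "y \<in> H (n, 0)" unfolding H_def by simp
        then show "y \<in> (\<Union>p. H p)" by blast
      qed
    qed
  qed
  have HF: "Fin_times_empty \<subseteq> hat_ideal J H"
  proof
    fix A assume "A \<in> Fin_times_empty"
    then obtain F where F: "finite F" "A \<subseteq> F \<times> UNIV" unfolding Fin_times_empty_def by blast
    have s1: "(\<Union>p\<in>A. H p) \<subseteq> b ` F" unfolding H_def using F(2) by auto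
    have s2: "b ` F \<subseteq> \<Union>J" using brange by blast
    have s3: "finite (\<Union>p\<in>A. H p)" using finite_subset[OF s1 finite_imageI[OF F(1)]] .
    have "(\<Union>p\<in>A. H p) \<in> J" using ideal_fin[OF J _ s3] s1 s2 by blast
    then show "A \<in> hat_ideal J H" using hat_of_union[OF J] by blast
  qed
  obtain G where G: "ideal_partition I G" and GH: "hat_ideal J H \<inter> Fin2 \<subseteq> hat_ideal I G"
    using P HJ HF unfolding prec_le_def by blast
  have Gp: "\<And>p. G p \<in> I" and Gd: "\<And>p q. p \<noteq> q \<Longrightarrow> G p \<inter> G q = {}"
    and GU: "(\<Union>p. G p) = \<Union>I"
    using G unfolding ideal_partition_def by blast+
  have key: "(\<Union>p\<in>A. G p) \<in> I" if "A \<in> Fin2" "A \<in> hat_ideal J H" for A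
    using hat_union_in[OF I hw G] GH that by blast
  have empty_hat: "A \<in> hat_ideal J H" if "\<forall>p\<in>A. 0 < snd p" for A
  proof -
    have "(\<Union>p\<in>A. H p) = {}" unfolding H_def using that by auto
    then show ?thesis using hat_of_union[OF J] ideal_empty[OF J] by metis
  qed
  define Pn where "Pn = (\<lambda>n. \<Union>p\<in>{n} \<times> {m. 0 < m}. G p)"
  have PnI: "Pn n \<in> I" for n unfolding Pn_def
  proof (rule key)
    have "{n'. infinite {m. (n', m) \<in> {n} \<times> {m. 0 < m}}} \<subseteq> {n}" by auto
    then show "{n} \<times> {m. 0 < m} \<in> Fin2" unfolding Fin2_def using finite_subset by blast
    show "{n} \<times> {m. 0 < m} \<in> hat_ideal J H" by (rule empty_hat) auto
  qed
  define W where "W = (\<Union>n. Pn n)"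
  have WI: "W \<in> I" unfolding W_def
  proof (rule selector_lemma[OF I hw])
    fix k show "Pn k \<in> I" by (rule PnI)
  next
    fix k l :: nat assume "k \<noteq> l" then show "Pn k \<inter> Pn l = {}"
      unfolding Pn_def using Gd by fastforce
  next
    fix X assume X: "X \<subseteq> (\<Union>k. Pn k)" and fin: "\<And>k. finite (X \<inter> Pn k)"
    define A where "A = {p. 0 < snd p \<and> G p \<inter> X \<noteq> {}}"
    have colfin: "finite {m. (n, m) \<in> A}" for n
    proof -
      have sub: "{m. (n, m) \<in> A} \<subseteq> (\<Union>x\<in>X \<inter> Pn n. {m. x \<in> G (n, m)})"
      proof
        fix m assume "m \<in> {m. (n, m) \<in> A}"
        then have m: "0 < m" "G (n, m) \<inter> X \<noteq> {}" unfolding A_def by auto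
        then obtain x where "x \<in> G (n, m)" "x \<in> X" by blast
        moreover then have "x \<in> Pn n" unfolding Pn_def using m by blast
        ultimately show "m \<in> (\<Union>x\<in>X \<inter> Pn n. {m. x \<in> G (n, m)})" by blast
      qed
      have one: "finite {m. x \<in> G (n, m)}" for x
      proof -
        have "{m. x \<in> G (n, m)} \<subseteq> {SOME m. x \<in> G (n, m)}"
        proof
          fix m assume m: "m \<in> {m. x \<in> G (n, m)}"
          then have "x \<in> G (n, SOME m. x \<in> G (n, m))" by (metis mem_Collect_eq someI)
          then have "m = (SOME m. x \<in> G (n, m))" using m Gd by blast
          then show "m \<in> {SOME m. x \<in> G (n, m)}" by simp
        qed
        then show ?thesis using finite_subset by blast
      qed
      show ?thesis using sub one fin[of n] by (meson finite_UN_I finite_subset)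
    qed
    have AF: "A \<in> Fin2" unfolding Fin2_def using colfin by simp
    have AH: "A \<in> hat_ideal J H" by (rule empty_hat) (simp add: A_def)
    have AIG: "A \<in> hat_ideal I G" using GH AF AH by blast
    have "X \<subseteq> (\<Union>p\<in>A. G p)"
    proof
      fix x assume x: "x \<in> X"
      then obtain n where "x \<in> Pn n" using X by blast
      then obtain m where "0 < m" "x \<in> G (n, m)" unfolding Pn_def by blast
      then have "(n, m) \<in> A" unfolding A_def using x by auto
      then show "x \<in> (\<Union>p\<in>A. G p)" using \<open>x \<in> G (n, m)\<close> by blast
    qed
    moreover have "\<forall>p\<in>A. finite (X \<inter> G p)"
    proof
      fix p assume p: "p \<in> A"
      obtain n m where nm: "p = (n, m)" by fastforce
      have "G p \<subseteq> Pn n" unfolding Pn_def using p nm A_def by auto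
      then have "X \<inter> G p \<subseteq> X \<inter> Pn n" by blast
      then show "finite (X \<inter> G p)" using fin[of n] by (rule finite_subset)
    qed
    ultimately show "X \<in> I" using AIG unfolding hat_ideal_def by blast
  qed
  define f where "f = (\<lambda>x. b (SOME n. x \<in> G (n, 0)))"
  show ?thesis unfolding katetov_le_def
  proof (intro exI conjI ballI)
    fix x show "f x \<in> \<Union>J" unfolding f_def using brange by blast
  next
    fix B assume B: "B \<in> J"
    define AB :: "(nat \<times> nat) set" where "AB = {p. snd p = 0 \<and> b (fst p) \<in> B}"
    have ABF: "AB \<in> Fin2"
    proof -
      have "finite {m. (n, m) \<in> AB}" for n
        by (rule finite_subset[of _ "{0}"]) (auto simp: AB_def)
      then show ?thesis unfolding Fin2_def by simp
    qed
    have ABH: "AB \<in> hat_ideal J H"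
    proof (rule hat_of_union[OF J])
      have "(\<Union>p\<in>AB. H p) \<subseteq> B" unfolding AB_def H_def by auto
      then show "(\<Union>p\<in>AB. H p) \<in> J" using ideal_sub[OF J B] by blast
    qed
    have V: "(\<Union>p\<in>AB. G p) \<in> I" by (rule key[OF ABF ABH])
    have "{x \<in> \<Union>I. f x \<in> B} \<subseteq> (\<Union>p\<in>AB. G p) \<union> W"
    proof
      fix x assume x: "x \<in> {x \<in> \<Union>I. f x \<in> B}"
      then obtain n m where nm: "x \<in> G (n, m)" using GU by (metis UN_E mem_Collect_eq surj_pair)
      show "x \<in> (\<Union>p\<in>AB. G p) \<union> W"
      proof (cases "m = 0")
        case False
        then have "x \<in> Pn n" unfolding Pn_def using nm by blast
        then show ?thesis unfolding W_def by blast
      next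
        case True
        define n' where "n' = (SOME n. x \<in> G (n, 0))"
        have "x \<in> G (n', 0)" unfolding n'_def using nm True by (metis someI)
        moreover have "b n' \<in> B" using x unfolding f_def n'_def by simp
        then have "(n', 0) \<in> AB" unfolding AB_def by simp
        ultimately show ?thesis by blast
      qed
    qed
    then show "{x \<in> \<Union>I. f x \<in> B} \<in> I" using ideal_sub[OF I ideal_Un[OF I V WI]] by blast
  qed
qed

theorem proposition8p5:
  fixes I :: "'a set set" and J :: "'b set set"
  assumes "is_ideal I" and "hereditary_weak_P I" and "is_ideal J"
  shows "prec_le J I \<longleftrightarrow> katetov_le J I"
  using prec_imp_katetov[OF assms] katetov_imp_prec[OF assms(1,3)] by blast

end
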